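(* For all $m\in\mathbb{N}$ and $\boldsymbol{\mu}\in\Delta_\mathbb{N}$, with $\boldsymbol{X}\sim\boldsymbol{\mu}^m$ and $\widehat{\boldsymbol{\mu}}_m$ its empirical measure, $$\mathbb{E}\,\Phi_m(\widehat{\boldsymbol{\mu}}_m)\le 2\Lambda_m(\boldsymbol{\mu}),$$ and for every $\delta\in(0,1)$, with probability at least $1-\delta$, $$\Phi_m(\widehat{\boldsymbol{\mu}}_m)\le 2\Lambda_m(\boldsymbol{\mu})+\sqrt{\log(1/\delta)/m}.$$
   Context: $\Delta_\mathbb{N}$ is the set of probability distributions on $\mathbb{N}=\{1,2,\dots\}$. For $\boldsymbol{X}=(X_1,\dots,X_m)$ i.i.d. from $\boldsymbol{\mu}$, $\widehat{\boldsymbol{\mu}}_m(i)=\frac1m\sum_{t=1}^m\mathbb{I}\{X_t=i\}$. $\Phi_m(\widehat{\boldsymbol{\mu}}_m):=\frac1{\sqrt m}\sum_{j\in\mathbb{N}}\sqrt{\widehat{\boldsymbol{\mu}}_m(j)}$. $\Lambda_m(\boldsymbol{\mu}):=\sum_{j:\boldsymbol{\mu}(j)<1/m}\boldsymbol{\mu}(j)+\frac{1}{2\sqrt m}\sum_{j:\boldsymbol{\mu}(j)\ge 1/m}\sqrt{\boldsymbol{\mu}(j)}$. $\log$ is the natural logarithm. *)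

theory Defs
  imports "HOL-Probability.Probability"
begin

text \<open>Empirical measure of a sample X_0..X_{m-1} (indices shifted to 0..m-1).\<close>
definition emp_measure :: "nat \<Rightarrow> (nat \<Rightarrow> nat) \<Rightarrow> nat \<Rightarrow> real" where
  "emp_measure m X i = real (card {t \<in> {..<m}. X t = i}) / real m"

definition Phi :: "nat \<Rightarrow> (nat \<Rightarrow> real) \<Rightarrow> real" where
  "Phi m \<nu> = (1 / sqrt (real m)) * (\<Sum>\<^sub>\<infinity> j\<in>{1..}. sqrt (\<nu> j))"

definition Lambda :: "nat \<Rightarrow> nat pmf \<Rightarrow> real" where
  "Lambda m \<mu> = (\<Sum>\<^sub>\<infinity> j\<in>{j\<in>{1..}. pmf \<mu> j < 1 / real m}. pmf \<mu> j)
     + (1 / (2 * sqrt (real m))) * (\<Sum>\<^sub>\<infinity> j\<in>{j\<in>{1..}. pmf \<mu> j \<ge> 1 / real m}. sqrt (pmf \<mu> j))"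

definition sample_pmf :: "nat \<Rightarrow> nat pmf \<Rightarrow> (nat \<Rightarrow> nat) pmf" where
  "sample_pmf m \<mu> = Pi_pmf {..<m} 0 (\<lambda>_. \<mu>)"

end

theory Submission
  imports Defs
begin


lemma bnd_integrable: "(\<And>x. \<bar>f x\<bar> \<le> B) \<Longrightarrow> integrable (measure_pmf M) (f::_\<Rightarrow>real)"
  by (rule measure_pmf.integrable_const_bound[where B=B]) auto

lemma abs_expectation_le:
  assumes "\<And>x. \<bar>f x\<bar> \<le> B"
  shows "\<bar>measure_pmf.expectation M (f::_\<Rightarrow>real)\<bar> \<le> B"
proof -
  have "\<bar>measure_pmf.expectation M f\<bar> \<le> measure_pmf.expectation M (\<lambda>x. \<bar>f x\<bar>)"
    by (rule integral_abs_bound)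
  also have "\<dots> \<le> measure_pmf.expectation M (\<lambda>x. B)"
  proof -
    have B0: "0 \<le> B" using abs_ge_zero[of "f undefined"] assms[of undefined] by linarith
    show ?thesis by (intro integral_mono bnd_integrable[where B=B]) (use assms B0 in auto)
  qed
  also have "\<dots> = B" by simp
  finally show ?thesis .
qed

lemma integral_bind_pmf_real:
  fixes f :: "'b \<Rightarrow> real"
  assumes "\<And>x. \<bar>f x\<bar> \<le> B"
  shows "measure_pmf.expectation (bind_pmf M N) f = measure_pmf.expectation M (\<lambda>x. measure_pmf.expectation (N x) f)"
  using measurable_measure_pmf[of N]
  unfolding measure_pmf_bind
  by (intro integral_bind[where K="count_space UNIV" and B=B and B'=1])
     (auto simp: assms measure_pmf.emeasure_space_1 intro: measure_pmf.finite_measure_axioms)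

lemma Pi_pmf_insert_bind:
  assumes "finite A" "i \<notin> A"
  shows "Pi_pmf (insert i A) d p = bind_pmf (Pi_pmf A d p) (\<lambda>g. map_pmf (\<lambda>y. g(i:=y)) (p i))"
  unfolding Pi_pmf_insert'[OF assms] map_pmf_def
  by (rule bind_commute_pmf)

lemma exp_bound_aux:
  fixes u B m l :: real
  assumes "\<bar>u\<bar> \<le> B" "l > 0"
  shows "\<bar>exp (l * (u - m))\<bar> \<le> exp (l * (B + \<bar>m\<bar>))"
proof -
  have "u - m \<le> B + \<bar>m\<bar>" using assms(1) by (auto simp: abs_le_iff)
  then have "l * (u - m) \<le> l * (B + \<bar>m\<bar>)" using assms(2) mult_left_mono by fastforce
  then show ?thesis by simp
qed

lemma mcdiarmid_mgf:
  fixes f :: "('i \<Rightarrow> 'a) \<Rightarrow> real" and p :: "'i \<Rightarrow> 'a pmf"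
  assumes "finite A" "l > 0" "c \<ge> 0"
  shows "(\<And>x. \<bar>f x\<bar> \<le> B) \<Longrightarrow> (\<And>x i y. i \<in> A \<Longrightarrow> \<bar>f (x(i:=y)) - f x\<bar> \<le> c) \<Longrightarrow>
    measure_pmf.expectation (Pi_pmf A d p)
      (\<lambda>x. exp (l * (f x - measure_pmf.expectation (Pi_pmf A d p) f))) \<le> exp (l\<^sup>2 * c\<^sup>2 * real (card A) / 8)"
  using assms(1)
proof (induction A arbitrary: f rule: finite_induct)
  case empty
  then show ?case by simp
next
  case (insert i A f)
  define P where "P = Pi_pmf A d p"
  define Q where "Q = p i"
  define h where "h g = measure_pmf.expectation Q (\<lambda>y. f (g(i:=y)))" for g
  have B0: "0 \<le> B" using abs_ge_zero[of "f undefined"] insert.prems(1)[of undefined] by linarith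
  have hB: "\<bar>h g\<bar> \<le> B" for g unfolding h_def by (rule abs_expectation_le) (rule insert.prems(1))
  have hdiff: "\<bar>h (g(j:=z)) - h g\<bar> \<le> c" if "j \<in> A" for g j z
  proof -
    have "j \<noteq> i" using that insert.hyps by auto
    have "h (g(j:=z)) - h g = measure_pmf.expectation Q (\<lambda>y. f ((g(i:=y))(j:=z)) - f (g(i:=y)))"
      unfolding h_def using \<open>j\<noteq>i\<close>
      by (subst Bochner_Integration.integral_diff)
         (auto intro!: bnd_integrable[where B=B] insert.prems simp: fun_upd_twist)
    also have "\<bar>\<dots>\<bar> \<le> c"
    proof (rule abs_expectation_le)
      fix y show "\<bar>f ((g(i:=y))(j:=z)) - f (g(i:=y))\<bar> \<le> c"
        using insert.prems(2)[of j "g(i:=y)" z] that by (simp add: fun_upd_def)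
    qed
    finally show ?thesis .
  qed
  have IH: "measure_pmf.expectation P (\<lambda>g. exp (l * (h g - measure_pmf.expectation P h)))
              \<le> exp (l\<^sup>2 * c\<^sup>2 * real (card A) / 8)"
    unfolding P_def
  proof (rule insert.IH)
    fix x show "\<bar>h x\<bar> \<le> B" by (rule hB)
  next
    fix x j y assume "j \<in> A" then show "\<bar>h (x(j:=y)) - h x\<bar> \<le> c" by (rule hdiff)
  qed
  have Pi: "Pi_pmf (insert i A) d p = bind_pmf P (\<lambda>g. map_pmf (\<lambda>y. g(i:=y)) Q)"
    unfolding P_def Q_def by (rule Pi_pmf_insert_bind) (use insert.hyps in auto)
  have Ef: "measure_pmf.expectation (Pi_pmf (insert i A) d p) f = measure_pmf.expectation P h"
    unfolding Pi h_def by (subst integral_bind_pmf_real[where B=B]) (auto simp: insert.prems)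
  define \<mu> where "\<mu> = measure_pmf.expectation P h"
  have hoeff: "measure_pmf.expectation Q (\<lambda>y. exp (l * (f (g(i:=y)) - h g))) \<le> exp (l\<^sup>2 * c\<^sup>2 / 8)" for g
  proof -
    define a where "a = (INF y. f (g(i:=y)))"
    have bdd: "bdd_below (range (\<lambda>y. f (g(i:=y))))"
    proof (rule bdd_belowI[where m="-B"])
      fix u assume "u \<in> range (\<lambda>y. f (g(i:=y)))"
      then obtain y where "u = f (g(i:=y))" by auto
      then show "-B \<le> u" using insert.prems(1)[of "g(i:=y)"] by linarith
    qed
    have a_le: "a \<le> f (g(i:=y))" for y unfolding a_def by (rule cINF_lower[OF bdd]) auto
    have le_a: "f (g(i:=y)) \<le> a + c" for y
    proof -
      have "f (g(i:=y)) - c \<le> a" unfolding a_def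
      proof (rule cINF_greatest)
        fix y' 
        have "\<bar>f ((g(i:=y'))(i:=y)) - f (g(i:=y'))\<bar> \<le> c" by (rule insert.prems(2)) auto
        then show "f (g(i:=y)) - c \<le> f (g(i:=y'))" by simp
      qed auto
      then show ?thesis by simp
    qed
    interpret I: interval_bounded_random_variable "measure_pmf Q" "\<lambda>y. f (g(i:=y))" a "a + c"
      by unfold_locales (auto simp: a_le le_a intro!: AE_I2)
    have "nn_integral Q (\<lambda>y. exp (l * (f (g(i:=y)) - h g))) \<le> ennreal (exp (l\<^sup>2 * (a + c - a)\<^sup>2 / 8))"
      unfolding h_def by (rule I.Hoeffdings_lemma_nn_integral) (use \<open>l>0\<close> in auto)
    moreover have "nn_integral Q (\<lambda>y. exp (l * (f (g(i:=y)) - h g))) =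
        ennreal (measure_pmf.expectation Q (\<lambda>y. exp (l * (f (g(i:=y)) - h g))))"
      by (rule nn_integral_eq_integral) (auto intro!: bnd_integrable[where B="exp (l * (B + \<bar>h g\<bar>))"]
          exp_bound_aux insert.prems \<open>l>0\<close>)
    ultimately show ?thesis by simp
  qed
  have "measure_pmf.expectation (Pi_pmf (insert i A) d p) (\<lambda>x. exp (l * (f x - measure_pmf.expectation (Pi_pmf (insert i A) d p) f)))
      = measure_pmf.expectation P (\<lambda>g. measure_pmf.expectation Q (\<lambda>y. exp (l * (f (g(i:=y)) - \<mu>))))"
    unfolding Ef \<mu>_def[symmetric] unfolding Pi
    by (subst integral_bind_pmf_real[where B="exp (l * (B + \<bar>\<mu>\<bar>))",
          OF exp_bound_aux[OF insert.prems(1) \<open>l>0\<close>]]) simp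
  also have "\<dots> = measure_pmf.expectation P (\<lambda>g. exp (l * (h g - \<mu>)) *
        measure_pmf.expectation Q (\<lambda>y. exp (l * (f (g(i:=y)) - h g))))"
  proof (rule Bochner_Integration.integral_cong[OF refl])
    fix g
    have "(\<lambda>y. exp (l * (f (g(i:=y)) - \<mu>))) = (\<lambda>y. exp (l * (h g - \<mu>)) * exp (l * (f (g(i:=y)) - h g)))"
      by (auto simp flip: exp_add simp: algebra_simps)
    then show "measure_pmf.expectation Q (\<lambda>y. exp (l * (f (g(i:=y)) - \<mu>))) =
        exp (l * (h g - \<mu>)) * measure_pmf.expectation Q (\<lambda>y. exp (l * (f (g(i:=y)) - h g)))"
      by simp
  qed
  also have "\<dots> \<le> measure_pmf.expectation P (\<lambda>g. exp (l * (h g - \<mu>)) * exp (l\<^sup>2 * c\<^sup>2 / 8))"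
  proof (rule integral_mono)
    show "integrable (measure_pmf P) (\<lambda>g. exp (l * (h g - \<mu>)) * exp (l\<^sup>2 * c\<^sup>2 / 8))"
      by (intro integrable_mult_left bnd_integrable[where B="exp (l * (B + \<bar>\<mu>\<bar>))"] exp_bound_aux hB \<open>l>0\<close>)
    show "integrable (measure_pmf P) (\<lambda>g. exp (l * (h g - \<mu>)) *
        measure_pmf.expectation Q (\<lambda>y. exp (l * (f (g(i:=y)) - h g))))"
    proof (rule bnd_integrable[where B="exp (l * (B + \<bar>\<mu>\<bar>)) * exp (l * (2 * B))"])
      fix g
      have b1: "\<bar>measure_pmf.expectation Q (\<lambda>y. exp (l * (f (g(i:=y)) - h g)))\<bar> \<le> exp (l * (2 * B))"
      proof (rule abs_expectation_le)
        fix y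
        have "\<bar>exp (l * (f (g(i:=y)) - h g))\<bar> \<le> exp (l * (B + \<bar>h g\<bar>))"
          by (rule exp_bound_aux[OF insert.prems(1) \<open>l>0\<close>])
        also have "\<dots> \<le> exp (l * (2 * B))" using hB[of g] \<open>l>0\<close> by simp
        finally show "\<bar>exp (l * (f (g(i:=y)) - h g))\<bar> \<le> exp (l * (2 * B))" .
      qed
      have b2: "\<bar>exp (l * (h g - \<mu>))\<bar> \<le> exp (l * (B + \<bar>\<mu>\<bar>))"
        by (rule exp_bound_aux[OF hB \<open>l>0\<close>])
      show "\<bar>exp (l * (h g - \<mu>)) * measure_pmf.expectation Q (\<lambda>y. exp (l * (f (g(i:=y)) - h g)))\<bar>
          \<le> exp (l * (B + \<bar>\<mu>\<bar>)) * exp (l * (2 * B))"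
        unfolding abs_mult by (rule mult_mono[OF b2 b1]) auto
    qed
    show "exp (l * (h g - \<mu>)) * measure_pmf.expectation Q (\<lambda>y. exp (l * (f (g(i:=y)) - h g)))
        \<le> exp (l * (h g - \<mu>)) * exp (l\<^sup>2 * c\<^sup>2 / 8)" for g
      by (intro mult_left_mono hoeff) auto
  qed
  also have "\<dots> = measure_pmf.expectation P (\<lambda>g. exp (l * (h g - \<mu>))) * exp (l\<^sup>2 * c\<^sup>2 / 8)"
    by simp
  also have "\<dots> \<le> exp (l\<^sup>2 * c\<^sup>2 * real (card A) / 8) * exp (l\<^sup>2 * c\<^sup>2 / 8)"
    using IH unfolding \<mu>_def by (intro mult_right_mono) auto
  also have "\<dots> = exp (l\<^sup>2 * c\<^sup>2 * real (card (insert i A)) / 8)"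
    using insert.hyps by (simp flip: exp_add add: field_simps)
  finally show ?case .
qed



definition cnt :: "nat \<Rightarrow> (nat \<Rightarrow> nat) \<Rightarrow> nat \<Rightarrow> nat" where
  "cnt m X j = card {t\<in>{..<m}. X t = j}"

lemma emp_cnt: "emp_measure m X j = real (cnt m X j) / real m"
  by (simp add: emp_measure_def cnt_def)

lemma cnt_zero: "j \<notin> X ` {..<m} \<Longrightarrow> cnt m X j = 0"
  unfolding cnt_def by (auto simp: card_eq_0_iff)

lemma Phi_eq:
  assumes "m \<ge> 1" "finite K" "X ` {..<m} \<inter> {1..} \<subseteq> K" "K \<subseteq> {1..}"
  shows "Phi m (emp_measure m X) = (\<Sum>j\<in>K. sqrt (real (cnt m X j))) / real m"
proof -
  have "(\<Sum>\<^sub>\<infinity> j\<in>{1..}. sqrt (emp_measure m X j)) = (\<Sum>\<^sub>\<infinity> j\<in>K. sqrt (emp_measure m X j))"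
  proof (rule infsum_cong_neutral)
    fix x assume "x \<in> {1..} - K"
    then have "x \<notin> X ` {..<m}" using assms(3) by auto
    then show "sqrt (emp_measure m X x) = 0" by (simp add: emp_cnt cnt_zero)
  qed (use assms(4) in auto)
  also have "\<dots> = (\<Sum>j\<in>K. sqrt (real (cnt m X j)) / sqrt (real m))"
    using assms(2) by (simp add: emp_cnt real_sqrt_divide)
  also have "\<dots> = (\<Sum>j\<in>K. sqrt (real (cnt m X j))) / sqrt (real m)"
    by (simp add: sum_divide_distrib)
  moreover have "sqrt (real m) * sqrt (real m) = real m" by simp
  moreover have "sqrt (real m) > 0" using assms(1) by simp
  ultimately show ?thesis unfolding Phi_def
    by (metis (no_types, lifting) divide_divide_eq_left mult_1 times_divide_eq_left)

qed

lemma sum_group: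
  fixes u :: "nat \<Rightarrow> real"
  shows "(\<Sum>t\<in>{..<m}. u (X t)) = (\<Sum>j\<in>X`{..<m}. real (cnt m X j) * u j)"
proof -
  have "(\<Sum>t\<in>{..<m}. u (X t)) = (\<Sum>j\<in>X`{..<m}. \<Sum>t\<in>{x. x \<in> {..<m} \<and> X x = j}. u (X t))"
    by (rule sum.image_gen) simp
  also have "\<dots> = (\<Sum>j\<in>X`{..<m}. real (cnt m X j) * u j)"
  proof (rule sum.cong[OF refl])
    fix j
    have "(\<Sum>t\<in>{x. x \<in> {..<m} \<and> X x = j}. u (X t)) = (\<Sum>t\<in>{x. x \<in> {..<m} \<and> X x = j}. u j)"
      by (rule sum.cong) auto
    then show "(\<Sum>t\<in>{x. x \<in> {..<m} \<and> X x = j}. u (X t)) = real (cnt m X j) * u j"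
      by (simp add: cnt_def)
  qed
  finally show ?thesis .
qed

lemma sqrt_le_nat: "sqrt (real n) \<le> real n"
proof -
  have "real n \<le> real n * real n" by (cases n) auto
  then have "sqrt (real n) \<le> sqrt (real n * real n)" by (rule real_sqrt_le_mono)
  then show ?thesis by simp
qed

lemma Phi_bounds:
  assumes "m \<ge> 1"
  shows "0 \<le> Phi m (emp_measure m X) \<and> Phi m (emp_measure m X) \<le> 1"
proof -
  let ?K = "X ` {..<m} \<inter> {1..}"
  have eq: "Phi m (emp_measure m X) = (\<Sum>j\<in>?K. sqrt (real (cnt m X j))) / real m"
    by (rule Phi_eq) (use assms in auto)
  have "(\<Sum>j\<in>?K. sqrt (real (cnt m X j))) \<le> (\<Sum>j\<in>?K. real (cnt m X j))"
    by (intro sum_mono sqrt_le_nat)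
  also have "\<dots> \<le> (\<Sum>j\<in>X`{..<m}. real (cnt m X j))"
    by (intro sum_mono2) auto
  also have "\<dots> = real m" using sum_group[where u="\<lambda>_. 1" and m=m and X=X] by simp
  finally have "(\<Sum>j\<in>?K. sqrt (real (cnt m X j))) \<le> real m" .
  moreover have "0 \<le> (\<Sum>j\<in>?K. sqrt (real (cnt m X j)))" by (intro sum_nonneg) auto
  ultimately show ?thesis unfolding eq using assms by auto
qed

lemma card_split:
  fixes m t :: nat
  assumes "t < m"
  shows "card {s\<in>{..<m}. P s} = card {s\<in>{..<m}. s \<noteq> t \<and> P s} + (if P t then 1 else 0)"
proof (cases "P t")
  case True
  then have "{s\<in>{..<m}. P s} = insert t {s\<in>{..<m}. s \<noteq> t \<and> P s}" using assms by auto
  moreover have "card (insert t {s\<in>{..<m}. s \<noteq> t \<and> P s}) = Suc (card {s\<in>{..<m}. s \<noteq> t \<and> P s})"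
  proof -
    have fin: "finite {s\<in>{..<m}. s \<noteq> t \<and> P s}" by (rule finite_subset[where B="{..<m}"]) auto
    show ?thesis by (rule card_insert_disjoint[OF fin]) auto
  qed
  ultimately show ?thesis using True by simp
next
  case False
  then have "{s\<in>{..<m}. P s} = {s\<in>{..<m}. s \<noteq> t \<and> P s}" by auto
  then show ?thesis using False by simp
qed

lemma cnt_upd:
  assumes "t < m"
  shows "real (cnt m (X(t:=y)) j) = real (cnt m X j) + (if y = j then 1 else 0) - (if X t = j then 1 else 0)"
proof -
  have "{s\<in>{..<m}. s \<noteq> t \<and> (X(t:=y)) s = j} = {s\<in>{..<m}. s \<noteq> t \<and> X s = j}" by auto
  then show ?thesis
    unfolding cnt_def using card_split[OF assms, of "\<lambda>s. (X(t:=y)) s = j"] card_split[OF assms, of "\<lambda>s. X s = j"]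
    by simp
qed

lemma sqrt_succ: "0 \<le> x \<Longrightarrow> sqrt (x + 1) \<le> sqrt x + 1"
proof -
  assume "0 \<le> x"
  have "x + 1 \<le> (sqrt x + 1)^2" using \<open>0 \<le> x\<close> by (simp add: power2_eq_square algebra_simps)
  then have "sqrt (x + 1) \<le> sqrt ((sqrt x + 1)^2)" by (rule real_sqrt_le_mono)
  then show ?thesis using \<open>0 \<le> x\<close> by simp
qed

lemma Phi_diff:
  assumes "m \<ge> 1" "t < m"
  shows "\<bar>Phi m (emp_measure m (X(t:=y))) - Phi m (emp_measure m X)\<bar> \<le> 1 / real m"
proof -
  define K where "K = insert y (X ` {..<m}) \<inter> {1..}"
  have fK: "finite K" unfolding K_def by auto
  have e1: "Phi m (emp_measure m (X(t:=y))) = (\<Sum>j\<in>K. sqrt (real (cnt m (X(t:=y)) j))) / real m"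
    by (rule Phi_eq) (use assms in \<open>auto simp: K_def\<close>)
  have e2: "Phi m (emp_measure m X) = (\<Sum>j\<in>K. sqrt (real (cnt m X j))) / real m"
    by (rule Phi_eq) (use assms in \<open>auto simp: K_def\<close>)
  define d where "d j = sqrt (real (cnt m (X(t:=y)) j)) - sqrt (real (cnt m X j))" for j
  have dle: "d j \<le> (if y = j then 1 else 0)" and dge: "- (if X t = j then 1 else 0) \<le> d j" for j
  proof -
    have c: "real (cnt m (X(t:=y)) j) = real (cnt m X j) + (if y = j then 1 else 0) - (if X t = j then 1 else 0)"
      by (rule cnt_upd[OF assms(2)])
    have "d j \<le> (if y = j then 1 else 0) \<and> - (if X t = j then 1 else 0) \<le> d j"
    proof (cases "y = j"; cases "X t = j")
      assume "y = j" "X t = j" then show ?thesis using c by (simp add: d_def)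
    next
      assume "y = j" "X t \<noteq> j"
      then have "d j = sqrt (real (cnt m X j) + 1) - sqrt (real (cnt m X j))" using c by (simp add: d_def)
      moreover have "sqrt (real (cnt m X j)) \<le> sqrt (real (cnt m X j) + 1)" by simp
      moreover have "(if y = j then 1 else 0) = (1::real)" "(if X t = j then 1 else 0) = (0::real)"
        using \<open>y = j\<close> \<open>X t \<noteq> j\<close> by auto
      ultimately show ?thesis using sqrt_succ[of "real (cnt m X j)"] by linarith
    next
      assume "y \<noteq> j" "X t = j"
      then have "real (cnt m X j) = real (cnt m (X(t:=y)) j) + 1" using c by simp
      then have "d j = sqrt (real (cnt m (X(t:=y)) j)) - sqrt (real (cnt m (X(t:=y)) j) + 1)" by (simp add: d_def)
      moreover have "sqrt (real (cnt m (X(t:=y)) j)) \<le> sqrt (real (cnt m (X(t:=y)) j) + 1)" by simp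
      moreover have "(if y = j then 1 else 0) = (0::real)" "(if X t = j then 1 else 0) = (1::real)"
        using \<open>y \<noteq> j\<close> \<open>X t = j\<close> by auto
      ultimately show ?thesis using sqrt_succ[of "real (cnt m (X(t:=y)) j)"] by linarith
    next
      assume "y \<noteq> j" "X t \<noteq> j" then show ?thesis using c by (simp add: d_def)
    qed
    then show "d j \<le> (if y = j then 1 else 0)" "- (if X t = j then 1 else 0) \<le> d j" by auto
  qed
  have "(\<Sum>j\<in>K. d j) \<le> (\<Sum>j\<in>K. (if y = j then 1 else 0))" by (intro sum_mono dle)
  also have "\<dots> \<le> 1" using fK by simp
  finally have u: "(\<Sum>j\<in>K. d j) \<le> 1" .
  have "(\<Sum>j\<in>K. - (if X t = j then 1 else 0)) \<le> (\<Sum>j\<in>K. d j)" by (intro sum_mono dge)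
  moreover have "(\<Sum>j\<in>K. - (if X t = j then 1 else 0)) \<ge> (-1::real)" using fK by (simp add: sum_negf)
  ultimately have l: "-1 \<le> (\<Sum>j\<in>K. d j)" by linarith
  have "Phi m (emp_measure m (X(t:=y))) - Phi m (emp_measure m X) = (\<Sum>j\<in>K. d j) / real m"
    unfolding e1 e2 d_def by (simp add: sum_subtractf diff_divide_distrib)
  then show ?thesis using u l assms(1) by (auto simp: abs_le_iff divide_le_eq le_divide_eq)
qed



lemma mcdiarmid_tail:
  fixes f :: "('i \<Rightarrow> 'a) \<Rightarrow> real" and p :: "'i \<Rightarrow> 'a pmf"
  assumes "finite A" "l > 0" "c \<ge> 0" "\<And>x. \<bar>f x\<bar> \<le> B" "\<And>x i y. i \<in> A \<Longrightarrow> \<bar>f (x(i:=y)) - f x\<bar> \<le> c"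
  shows "measure_pmf.prob (Pi_pmf A d p) {x. f x - measure_pmf.expectation (Pi_pmf A d p) f \<ge> t}
           \<le> exp (l\<^sup>2 * c\<^sup>2 * real (card A) / 8) / exp (l * t)"
proof -
  define M where "M = Pi_pmf A d p"
  define E where "E = measure_pmf.expectation M f"
  have "{x. f x - E \<ge> t} = {x \<in> space (measure_pmf M). exp (l * t) \<le> exp (l * (f x - E))}"
    using assms(2) by auto
  then have "measure_pmf.prob M {x. f x - E \<ge> t} =
      measure_pmf.prob M {x \<in> space (measure_pmf M). exp (l * t) \<le> exp (l * (f x - E))}" by simp
  also have "\<dots> \<le> measure_pmf.expectation M (\<lambda>x. exp (l * (f x - E))) / exp (l * t)"
    by (rule integral_Markov_inequality_measure[where A=UNIV])
       (auto intro!: bnd_integrable[where B="exp (l * (B + \<bar>E\<bar>))"] exp_bound_aux assms(4) assms(2))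
  also have "\<dots> \<le> exp (l\<^sup>2 * c\<^sup>2 * real (card A) / 8) / exp (l * t)"
    unfolding M_def E_def
    by (intro divide_right_mono mcdiarmid_mgf[where B=B] assms) auto
  finally show ?thesis unfolding M_def E_def .
qed

lemma amgm_sqrt:
  fixes a n :: real
  assumes "a > 0" "n \<ge> 0"
  shows "sqrt n \<le> n / (2 * a) + a / 2"
proof -
  have "0 \<le> (sqrt n - a)^2" by simp
  also have "(sqrt n - a)^2 = n - 2 * a * sqrt n + a^2"
    using assms by (simp add: power2_eq_square algebra_simps)
  finally have "2 * a * sqrt n \<le> n + a^2" by simp
  then show ?thesis using assms by (simp add: field_simps power2_eq_square)
qed

lemma expect_bound:
  assumes m1: "m \<ge> 1" and supp: "set_pmf \<mu> \<subseteq> {1..}"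
  shows "measure_pmf.expectation (sample_pmf m \<mu>) (\<lambda>X. Phi m (emp_measure m X)) \<le> 2 * Lambda m \<mu>"
proof -
  define S where "S = {j\<in>{1..}. pmf \<mu> j < 1 / real m}"
  define L where "L = {j\<in>{1..}. pmf \<mu> j \<ge> 1 / real m}"
  have mpos: "real m > 0" using m1 by simp
  have finL: "finite L"
  proof -
    have "finite L \<and> card L \<le> m"
    proof (rule finite_if_finite_subsets_card_bdd)
      fix G assume G: "G \<subseteq> L" "finite G"
      have "real (card G) * (1 / real m) = (\<Sum>j\<in>G. 1 / real m)" by simp
      also have "\<dots> \<le> (\<Sum>j\<in>G. pmf \<mu> j)" using G by (intro sum_mono) (auto simp: L_def)
      also have "\<dots> = measure_pmf.prob \<mu> G" using G by (simp add: measure_measure_pmf_finite)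
      also have "\<dots> \<le> 1" by simp
      finally show "card G \<le> m" using mpos by (simp add: field_simps)
    qed
    then show ?thesis by simp
  qed
  define a where "a j = sqrt (real m * pmf \<mu> j)" for j
  have aL: "a j \<ge> 1" if "j \<in> L" for j
    using that mpos unfolding a_def L_def by (auto simp: field_simps)
  define u where "u j = (if j \<in> S then 1 else if j \<in> L then 1 / (2 * a j) else 0)" for j
  have u01: "0 \<le> u j \<and> u j \<le> 1" for j
    using aL[of j] unfolding u_def by auto
  define C where "C = (\<Sum>j\<in>L. a j / 2)"
  define G where "G X = (\<Sum>t\<in>{..<m}. u (X t)) / real m + C / real m" for X
  have pw: "Phi m (emp_measure m X) \<le> G X" for X
  proof -
    define K where "K = X ` {..<m} \<inter> {1..}"
    have fK: "finite K" unfolding K_def by auto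
    have eq: "Phi m (emp_measure m X) = (\<Sum>j\<in>K. sqrt (real (cnt m X j))) / real m"
      by (rule Phi_eq) (use m1 in \<open>auto simp: K_def\<close>)
    have "(\<Sum>j\<in>K. sqrt (real (cnt m X j))) \<le>
        (\<Sum>j\<in>K. real (cnt m X j) * u j + (if j \<in> L then a j / 2 else 0))"
    proof (rule sum_mono)
      fix j assume "j \<in> K"
      then have j1: "j \<in> {1..}" by (simp add: K_def)
      show "sqrt (real (cnt m X j)) \<le> real (cnt m X j) * u j + (if j \<in> L then a j / 2 else 0)"
      proof (cases "j \<in> S")
        case True
        then have "j \<notin> L" by (auto simp: S_def L_def)
        then show ?thesis using True sqrt_le_nat[of "cnt m X j"] by (simp add: u_def)
      next
        case False
        then have "j \<in> L" using j1 by (auto simp: S_def L_def)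
        then have "a j > 0" using aL[of j] by simp
        then have "sqrt (real (cnt m X j)) \<le> real (cnt m X j) / (2 * a j) + a j / 2"
          by (intro amgm_sqrt) auto
        then show ?thesis using False \<open>j \<in> L\<close> by (simp add: u_def)
      qed
    qed
    also have "\<dots> = (\<Sum>j\<in>K. real (cnt m X j) * u j) + (\<Sum>j\<in>K \<inter> L. a j / 2)"
      by (simp add: sum.distrib sum.inter_restrict[OF fK])
    also have "(\<Sum>j\<in>K \<inter> L. a j / 2) \<le> C"
      unfolding C_def by (intro sum_mono2 finL) (auto simp: a_def)
    also have "(\<Sum>j\<in>K. real (cnt m X j) * u j) = (\<Sum>j\<in>X ` {..<m}. real (cnt m X j) * u j)"
    proof (rule sum.mono_neutral_left)
      show "\<forall>j\<in>X ` {..<m} - K. real (cnt m X j) * u j = 0"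
        by (auto simp: K_def u_def S_def L_def)
    qed (auto simp: K_def)
    also have "\<dots> = (\<Sum>t\<in>{..<m}. u (X t))" by (rule sum_group[symmetric])
    finally have H: "(\<Sum>j\<in>K. sqrt (real (cnt m X j))) \<le> (\<Sum>t\<in>{..<m}. u (X t)) + C" by simp
    show ?thesis unfolding eq G_def add_divide_distrib[symmetric]
      using divide_right_mono[OF H, of "real m"] mpos by simp
  qed
  have sb: "\<bar>(\<Sum>t\<in>{..<m}. u (X t)) / real m\<bar> \<le> 1" for X
  proof -
    have "0 \<le> (\<Sum>t\<in>{..<m}. u (X t))" using u01 by (auto intro: sum_nonneg)
    moreover have "(\<Sum>t\<in>{..<m}. u (X t)) \<le> (\<Sum>t\<in>{..<m}. 1)"
      by (rule sum_mono) (use u01 in blast)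
    ultimately have "0 \<le> (\<Sum>t\<in>{..<m}. u (X t))" "(\<Sum>t\<in>{..<m}. u (X t)) \<le> real m" by auto
    then show ?thesis using mpos by simp
  qed
  have Gb: "\<bar>G X\<bar> \<le> 1 + \<bar>C\<bar> / real m" for X
    unfolding G_def using sb[of X] mpos by (simp add: abs_triangle_ineq order.trans[OF abs_triangle_ineq])
  have Phib: "\<bar>Phi m (emp_measure m X)\<bar> \<le> 1" for X using Phi_bounds[OF m1, of X] by auto
  define P where "P = sample_pmf m \<mu>"
  have comp: "measure_pmf.expectation P (\<lambda>X. u (X t)) = measure_pmf.expectation \<mu> u" if "t < m" for t
  proof -
    have "map_pmf (\<lambda>X. X t) P = \<mu>" unfolding P_def sample_pmf_def
      using that by (subst Pi_pmf_component) auto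
    then show ?thesis by (metis integral_map_pmf)
  qed
  have "measure_pmf.expectation P (\<lambda>X. Phi m (emp_measure m X)) \<le> measure_pmf.expectation P G"
    by (intro integral_mono pw bnd_integrable[where B=1] bnd_integrable[where B="1 + \<bar>C\<bar> / real m"] Phib Gb)
  also have "measure_pmf.expectation P G =
      (\<Sum>t\<in>{..<m}. measure_pmf.expectation P (\<lambda>X. u (X t))) / real m + C / real m"
  proof -
    have "measure_pmf.expectation P G = measure_pmf.expectation P (\<lambda>X. (\<Sum>t\<in>{..<m}. u (X t)) / real m)
        + measure_pmf.expectation P (\<lambda>X. C / real m)"
      unfolding G_def by (rule Bochner_Integration.integral_add) (intro bnd_integrable[where B=1] sb, simp)
    also have "measure_pmf.expectation P (\<lambda>X. (\<Sum>t\<in>{..<m}. u (X t)) / real m)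
        = measure_pmf.expectation P (\<lambda>X. (\<Sum>t\<in>{..<m}. u (X t))) / real m"
      by (rule integral_divide_zero)
    also have "measure_pmf.expectation P (\<lambda>X. (\<Sum>t\<in>{..<m}. u (X t)))
        = (\<Sum>t\<in>{..<m}. measure_pmf.expectation P (\<lambda>X. u (X t)))"
    proof (rule Bochner_Integration.integral_sum)
      fix t show "integrable (measure_pmf P) (\<lambda>X. u (X t))"
        by (rule bnd_integrable[where B=1]) (use u01 in \<open>auto simp: abs_le_iff\<close>)
    qed
    finally show ?thesis by simp
  qed
  also have "\<dots> = measure_pmf.expectation \<mu> u + C / real m"
    using comp mpos by simp
  also have "measure_pmf.expectation \<mu> u = measure_pmf.prob \<mu> S + (\<Sum>j\<in>L. (1 / (2 * a j)) * pmf \<mu> j)"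
  proof -
    define w where "w j = (if j \<in> L then 1 / (2 * a j) else 0)" for j
    have "u = (\<lambda>j. indicator S j + w j)"
      by (auto simp: u_def w_def S_def L_def indicator_def fun_eq_iff)
    then have "measure_pmf.expectation \<mu> u = measure_pmf.expectation \<mu> (indicator S) + measure_pmf.expectation \<mu> w"
    proof -
      have wb: "\<bar>w j\<bar> \<le> 1" for j using aL[of j] by (auto simp: w_def)
      have ib: "\<bar>indicator S j\<bar> \<le> (1::real)" for j by (auto simp: indicator_def)
      have "measure_pmf.expectation \<mu> (\<lambda>j. indicator S j + w j) =
          measure_pmf.expectation \<mu> (indicator S) + measure_pmf.expectation \<mu> w"
        by (rule Bochner_Integration.integral_add) (rule bnd_integrable[where B=1], rule ib, rule bnd_integrable[where B=1], rule wb)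
      then show ?thesis using \<open>u = _\<close> by simp
    qed
    also have "measure_pmf.expectation \<mu> w = (\<Sum>j\<in>L. w j * pmf \<mu> j)"
      by (rule integral_measure_pmf_real[OF finL]) (auto simp: w_def split: if_splits)
    also have "\<dots> = (\<Sum>j\<in>L. (1 / (2 * a j)) * pmf \<mu> j)" by (rule sum.cong) (auto simp: w_def)
    finally show ?thesis by simp
  qed
  also have "measure_pmf.prob \<mu> S + (\<Sum>j\<in>L. (1 / (2 * a j)) * pmf \<mu> j) + C / real m =
      measure_pmf.prob \<mu> S + (\<Sum>j\<in>L. sqrt (pmf \<mu> j) / sqrt (real m))"
  proof -
    have "(\<Sum>j\<in>L. (1 / (2 * a j)) * pmf \<mu> j) + C / real m = (\<Sum>j\<in>L. (1 / (2 * a j)) * pmf \<mu> j + a j / 2 / real m)"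
      unfolding C_def by (simp add: sum.distrib sum_divide_distrib)
    also have "\<dots> = (\<Sum>j\<in>L. sqrt (pmf \<mu> j) / sqrt (real m))"
    proof (rule sum.cong[OF refl])
      fix j assume "j \<in> L"
      then have pp: "pmf \<mu> j > 0" using mpos by (auto simp: L_def intro: less_le_trans[of 0 "1 / real m"])
      have sp: "sqrt (pmf \<mu> j) * sqrt (pmf \<mu> j) = pmf \<mu> j" "sqrt (real m) * sqrt (real m) = real m"
        using pp by auto
      have "sqrt (pmf \<mu> j) > 0" "sqrt (real m) > 0" using pp mpos by auto
      then show "(1 / (2 * a j)) * pmf \<mu> j + a j / 2 / real m = sqrt (pmf \<mu> j) / sqrt (real m)"
        unfolding a_def real_sqrt_mult using sp
        by (simp add: field_simps)
    qed
    finally show ?thesis by simp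
  qed
  also have "\<dots> \<le> 2 * Lambda m \<mu>"
  proof -
    have "(\<Sum>\<^sub>\<infinity> j\<in>S. pmf \<mu> j) = measure_pmf.prob \<mu> S"
      by (simp add: measure_pmf_conv_infsetsum infsetsum_infsum[OF pmf_abs_summable])
    moreover have "(\<Sum>\<^sub>\<infinity> j\<in>L. sqrt (pmf \<mu> j)) = (\<Sum>j\<in>L. sqrt (pmf \<mu> j))" using finL by simp
    ultimately have "Lambda m \<mu> = measure_pmf.prob \<mu> S + (1 / (2 * sqrt (real m))) * (\<Sum>j\<in>L. sqrt (pmf \<mu> j))"
      unfolding Lambda_def S_def L_def by simp
    moreover have "(\<Sum>j\<in>L. sqrt (pmf \<mu> j) / sqrt (real m)) = (\<Sum>j\<in>L. sqrt (pmf \<mu> j)) / sqrt (real m)"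
      by (simp add: sum_divide_distrib)
    ultimately show ?thesis using measure_nonneg[of "measure_pmf \<mu>" S] by simp
  qed
  finally show ?thesis unfolding P_def .
qed



theorem theorem3:
  fixes m :: nat and \<mu> :: "nat pmf"
  assumes "m \<ge> 1"
    and "set_pmf \<mu> \<subseteq> {1..}"
  shows "measure_pmf.expectation (sample_pmf m \<mu>) (\<lambda>X. Phi m (emp_measure m X))
           \<le> 2 * Lambda m \<mu>
       \<and> (\<forall>\<delta>::real. 0 < \<delta> \<and> \<delta> < 1 \<longrightarrow>
            measure_pmf.prob (sample_pmf m \<mu>)
              {X. Phi m (emp_measure m X) \<le> 2 * Lambda m \<mu> + sqrt (ln (1 / \<delta>) / real m)}
            \<ge> 1 - \<delta>)"
proof -
  have E: "measure_pmf.expectation (sample_pmf m \<mu>) (\<lambda>X. Phi m (emp_measure m X)) \<le> 2 * Lambda m \<mu>"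
    by (rule expect_bound[OF assms])
  have mpos: "real m > 0" using assms(1) by simp
  have "\<forall>\<delta>::real. 0 < \<delta> \<and> \<delta> < 1 \<longrightarrow>
            measure_pmf.prob (sample_pmf m \<mu>)
              {X. Phi m (emp_measure m X) \<le> 2 * Lambda m \<mu> + sqrt (ln (1 / \<delta>) / real m)}
            \<ge> 1 - \<delta>"
  proof (intro allI impI)
    fix \<delta> :: real assume \<delta>: "0 < \<delta> \<and> \<delta> < 1"
    define f where "f X = Phi m (emp_measure m X)" for X
    define P where "P = sample_pmf m \<mu>"
    define Ef where "Ef = measure_pmf.expectation P f"
    define t where "t = sqrt (ln (1 / \<delta>) / real m)"
    have lnpos: "ln (1 / \<delta>) > 0" using \<delta> by simp
    have tpos: "t > 0" unfolding t_def using lnpos mpos by simp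
    have mt2: "real m * t\<^sup>2 = ln (1 / \<delta>)"
      unfolding t_def using lnpos mpos by simp
    define l where "l = 4 * real m * t"
    have lpos: "l > 0" unfolding l_def using mpos tpos by simp
    have tail: "measure_pmf.prob P {X. f X - Ef \<ge> t}
        \<le> exp (l\<^sup>2 * (1 / real m)\<^sup>2 * real (card {..<m}) / 8) / exp (l * t)"
      unfolding P_def sample_pmf_def Ef_def
    proof (rule mcdiarmid_tail[where B=1])
      fix X show "\<bar>f X\<bar> \<le> 1" unfolding f_def using Phi_bounds[OF assms(1), of X] by auto
    next
      fix X i y assume "i \<in> {..<m}"
      then show "\<bar>f (X(i := y)) - f X\<bar> \<le> 1 / real m"
        unfolding f_def by (intro Phi_diff assms(1)) auto
    qed (use lpos in auto)
    also have "exp (l\<^sup>2 * (1 / real m)\<^sup>2 * real (card {..<m}) / 8) / exp (l * t) = exp (- 2 * (real m * t\<^sup>2))"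
      unfolding l_def using mpos by (simp add: exp_diff[symmetric] field_simps power2_eq_square)
    also have "\<dots> = \<delta>\<^sup>2"
    proof -
      have "- 2 * (real m * t\<^sup>2) = ln (\<delta>^2)" unfolding mt2 using \<delta> by (simp add: ln_div ln_realpow)
      then show ?thesis using \<delta> by simp
    qed
    also have "\<dots> \<le> \<delta>" using \<delta> by (simp add: power2_eq_square mult_le_cancel_right1 less_imp_le)
    finally have tl: "measure_pmf.prob P {X. f X - Ef \<ge> t} \<le> \<delta>" .
    have EfL: "Ef \<le> 2 * Lambda m \<mu>" using E unfolding Ef_def P_def f_def .
    have sub: "UNIV - {X. f X - Ef \<ge> t} \<subseteq> {X. f X \<le> 2 * Lambda m \<mu> + t}" using EfL by auto
    have "1 - \<delta> \<le> 1 - measure_pmf.prob P {X. f X - Ef \<ge> t}" using tl by simp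
    also have "\<dots> = measure_pmf.prob P (UNIV - {X. f X - Ef \<ge> t})"
      using measure_pmf.prob_compl[of "{X. f X - Ef \<ge> t}" P] by simp
    also have "\<dots> \<le> measure_pmf.prob P {X. f X \<le> 2 * Lambda m \<mu> + t}"
      by (rule measure_pmf.finite_measure_mono[OF sub]) simp
    finally show "measure_pmf.prob (sample_pmf m \<mu>)
              {X. Phi m (emp_measure m X) \<le> 2 * Lambda m \<mu> + sqrt (ln (1 / \<delta>) / real m)} \<ge> 1 - \<delta>"
      unfolding P_def f_def t_def .
  qed
  with E show ?thesis by blast
qed

end
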